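(* Let $F=\breve F(\alpha_1,\dots,\alpha_t)$ be a fence with shared elements $s_1,\dots,s_{t-1}$. Then $Y=\{\hat\chi_{s_i}: i\in[t-1]\}$ is linearly independent and $\operatorname{Span}_{\mathbb R}(Y)\cap I_T(F)=\{0\}$.
   Context: Fences: let $\alpha=(\alpha_1,\dots,\alpha_t)$ be positive integers with $t\ge2$ and $\alpha_1,\alpha_t\ge2$. Put $a_0=0$, $a_i=\alpha_1+\dots+\alpha_i$, $n=a_t-1$. The fence $\breve F(\alpha)$ is the poset on $\{x_1,\dots,x_n\}$ whose cover relations are: for $1\le j\le n-1$ with $a_{i-1}\le j<a_i$, $x_j\lessdot x_{j+1}$ if $i$ is odd and $x_j\gtrdot x_{j+1}$ if $i$ is even. Shared elements are $s_i=x_{a_i}$, $i\in[t-1]$. $\mathcal J(F)$ is the set of order ideals. For $q\in F$, $I\in\mathcal J(F)$: $\hat\chi_q(I)=1$ if $q\in I$, else $0$; $T_q(I)=1$ if $q\in\min(F\setminus I)$, $-1$ if $q\in\max(I)$, $0$ otherwise. $f\equiv\text{const}$ means $f=c+\sum_{q\in F}c_qT_q$ for real constants $c,c_q$. The order ideal toggleability space is $I_T(F)=\{f\in\operatorname{Span}_{\mathbb R}\{\hat\chi_q:q\in F\}: f\equiv\text{const}\}$. *)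

theory Defs
  imports Complex_Main
begin

text \<open>A composition alpha = (alpha_1,...,alpha_t) is a list of naturals; alpha_i = alpha ! (i-1).
  Elements x_1,...,x_n of the fence are represented by the naturals 1..n.\<close>

definition fence_a :: "nat list \<Rightarrow> nat \<Rightarrow> nat" where
  "fence_a \<alpha> i = sum_list (take i \<alpha>)"

definition fence_n :: "nat list \<Rightarrow> nat" where
  "fence_n \<alpha> = fence_a \<alpha> (length \<alpha>) - 1"

definition fence_elems :: "nat list \<Rightarrow> nat set" where
  "fence_elems \<alpha> = {1..fence_n \<alpha>}"

text \<open>Cover relation: (p,q) means x_p is covered by x_q.\<close>
definition fence_cover :: "nat list \<Rightarrow> (nat \<times> nat) set" where
  "fence_cover \<alpha> = {(p, q). \<exists>j i. 1 \<le> j \<and> j \<le> fence_n \<alpha> - 1 \<and> 1 \<le> i \<and> i \<le> length \<alpha>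
      \<and> fence_a \<alpha> (i - 1) \<le> j \<and> j < fence_a \<alpha> i
      \<and> ((odd i \<and> p = j \<and> q = j + 1) \<or> (even i \<and> p = j + 1 \<and> q = j))}"

definition fence_le :: "nat list \<Rightarrow> nat \<Rightarrow> nat \<Rightarrow> bool" where
  "fence_le \<alpha> p q \<longleftrightarrow> p \<in> fence_elems \<alpha> \<and> q \<in> fence_elems \<alpha> \<and> (p, q) \<in> (fence_cover \<alpha>)\<^sup>*"

definition fence_less :: "nat list \<Rightarrow> nat \<Rightarrow> nat \<Rightarrow> bool" where
  "fence_less \<alpha> p q \<longleftrightarrow> fence_le \<alpha> p q \<and> p \<noteq> q"

definition fence_shared :: "nat list \<Rightarrow> nat \<Rightarrow> nat" where
  "fence_shared \<alpha> i = fence_a \<alpha> i"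

definition fence_ideals :: "nat list \<Rightarrow> nat set set" where
  "fence_ideals \<alpha> = {I. I \<subseteq> fence_elems \<alpha> \<and> (\<forall>q\<in>I. \<forall>p. fence_le \<alpha> p q \<longrightarrow> p \<in> I)}"

definition chi_hat :: "nat \<Rightarrow> nat set \<Rightarrow> real" where
  "chi_hat q I = (if q \<in> I then 1 else 0)"

definition toggle_T :: "nat list \<Rightarrow> nat \<Rightarrow> nat set \<Rightarrow> real" where
  "toggle_T \<alpha> q I =
     (if q \<in> fence_elems \<alpha> - I \<and> (\<forall>p\<in>fence_elems \<alpha> - I. \<not> fence_less \<alpha> p q) then 1
      else if q \<in> I \<and> (\<forall>p\<in>I. \<not> fence_less \<alpha> q p) then -1
      else 0)"

text \<open>Functions on J(F) are represented as functions nat set => real, only their values on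
  J(F) matter. f \<equiv> const.\<close>
definition toggle_const :: "nat list \<Rightarrow> (nat set \<Rightarrow> real) \<Rightarrow> bool" where
  "toggle_const \<alpha> f \<longleftrightarrow> (\<exists>c cq. \<forall>I\<in>fence_ideals \<alpha>.
      f I = c + (\<Sum>q\<in>fence_elems \<alpha>. cq q * toggle_T \<alpha> q I))"

definition in_chi_span :: "nat list \<Rightarrow> (nat set \<Rightarrow> real) \<Rightarrow> bool" where
  "in_chi_span \<alpha> f \<longleftrightarrow> (\<exists>cq. \<forall>I\<in>fence_ideals \<alpha>.
      f I = (\<Sum>q\<in>fence_elems \<alpha>. cq q * chi_hat q I))"

definition toggleability_space :: "nat list \<Rightarrow> (nat set \<Rightarrow> real) set" where
  "toggleability_space \<alpha> = {f. in_chi_span \<alpha> f \<and> toggle_const \<alpha> f}"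

end

theory Submission
  imports Defs
begin


definition pcov :: "(nat \<Rightarrow> bool) \<Rightarrow> nat \<Rightarrow> (nat \<times> nat) set" where
  "pcov up n = {(p,q). \<exists>j. 1 \<le> j \<and> j < n \<and> ((up j \<and> p = j \<and> q = Suc j) \<or> (\<not> up j \<and> p = Suc j \<and> q = j))}"

lemma pcov_iff: "(p,q) \<in> pcov up n \<longleftrightarrow>
   (1 \<le> p \<and> p < n \<and> q = Suc p \<and> up p) \<or> (1 \<le> q \<and> q < n \<and> p = Suc q \<and> \<not> up q)"
  unfolding pcov_def by auto

definition pideal :: "(nat \<Rightarrow> bool) \<Rightarrow> nat \<Rightarrow> nat set \<Rightarrow> bool" where
  "pideal up n I \<longleftrightarrow> I \<subseteq> {1..n} \<and> (\<forall>p q. (p,q) \<in> pcov up n \<longrightarrow> q \<in> I \<longrightarrow> p \<in> I)"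

definition Tl :: "(nat \<Rightarrow> bool) \<Rightarrow> nat \<Rightarrow> nat \<Rightarrow> nat set \<Rightarrow> real" where
  "Tl up n q I = (if q \<notin> I \<and> (\<forall>p. (p,q) \<in> pcov up n \<longrightarrow> p \<in> I) then 1
     else if q \<in> I \<and> (\<forall>p. (q,p) \<in> pcov up n \<longrightarrow> p \<notin> I) then -1 else 0)"

lemma Tl_alt: "Tl up n q I = (if q \<notin> I \<and> (2 \<le> q \<and> q \<le> n \<and> up (q-1) \<longrightarrow> q-1 \<in> I)
      \<and> (1 \<le> q \<and> q < n \<and> \<not> up q \<longrightarrow> Suc q \<in> I) then 1
   else if q \<in> I \<and> (1 \<le> q \<and> q < n \<and> up q \<longrightarrow> Suc q \<notin> I)
      \<and> (2 \<le> q \<and> q \<le> n \<and> \<not> up (q-1) \<longrightarrow> q - 1 \<notin> I) then -1 else 0)"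
proof -
  have A: "(\<forall>p. (p,q) \<in> pcov up n \<longrightarrow> p \<in> I) \<longleftrightarrow> ((2 \<le> q \<and> q \<le> n \<and> up (q-1) \<longrightarrow> q-1 \<in> I)
      \<and> (1 \<le> q \<and> q < n \<and> \<not> up q \<longrightarrow> Suc q \<in> I))"
    unfolding pcov_iff
    apply (rule iffI)
     apply (intro conjI impI)
      apply (drule spec[of _ "q-1"], force)
     apply (drule spec[of _ "Suc q"], force)
    by auto
  have B: "(\<forall>p. (q,p) \<in> pcov up n \<longrightarrow> p \<notin> I) \<longleftrightarrow> ((1 \<le> q \<and> q < n \<and> up q \<longrightarrow> Suc q \<notin> I)
      \<and> (2 \<le> q \<and> q \<le> n \<and> \<not> up (q-1) \<longrightarrow> q - 1 \<notin> I))"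
    unfolding pcov_iff
    apply (rule iffI)
     apply (intro conjI impI)
      apply (drule spec[of _ "Suc q"], force)
     apply (drule spec[of _ "q-1"], force)
    by auto
  show ?thesis unfolding Tl_def A B by simp
qed

lemma Tl_local:
  assumes "1 \<le> q" "I \<inter> {q-1,q,Suc q} = J \<inter> {q-1,q,Suc q}"
  shows "Tl up n q I = Tl up n q J"
proof -
  have "q \<in> I \<longleftrightarrow> q \<in> J" "q-1 \<in> I \<longleftrightarrow> q-1 \<in> J" "Suc q \<in> I \<longleftrightarrow> Suc q \<in> J"
    using assms(2) by blast+
  then show ?thesis unfolding Tl_alt by simp
qed

lemma pideal_Un: "pideal up n X \<Longrightarrow> pideal up n Y \<Longrightarrow> pideal up n (X \<union> Y)"
  unfolding pideal_def by blast
lemma pideal_Int: "pideal up n X \<Longrightarrow> pideal up n Y \<Longrightarrow> pideal up n (X \<inter> Y)"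
  unfolding pideal_def by blast

lemma pideal_prefix: "k \<le> n \<Longrightarrow> (1 \<le> k \<and> k < n \<longrightarrow> up k) \<Longrightarrow> pideal up n {1..k}"
  unfolding pideal_def pcov_iff by (auto simp: Suc_le_eq le_less)

lemma pideal_suffix: "(1 \<le> k \<and> k < n \<longrightarrow> \<not> up k) \<Longrightarrow> pideal up n {Suc k..n}"
  unfolding pideal_def pcov_iff by (auto simp: Suc_le_eq le_less)

lemma pideal_empty: "pideal up n {}" unfolding pideal_def by auto

definition turn :: "(nat \<Rightarrow> bool) \<Rightarrow> nat \<Rightarrow> nat \<Rightarrow> bool" where
  "turn up n q \<longleftrightarrow> 2 \<le> q \<and> q < n \<and> up (q-1) \<noteq> up q"

lemma maxprin:
  fixes e :: "nat \<Rightarrow> real"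
  assumes "e 0 = 0" "e (Suc n) = 0" "\<forall>q. 1 \<le> q \<and> q \<le> n \<longrightarrow> e q = 0 \<or> 2 * e q = e (q-1) + e (Suc q)"
  shows "\<forall>q \<le> Suc n. e q \<le> 0"
proof (rule ccontr)
  assume "\<not> ?thesis"
  then obtain q0 where q0: "q0 \<le> Suc n" "e q0 > 0" by force
  define M where "M = Max (e ` {0..Suc n})"
  have Mge: "\<And>k. k \<le> Suc n \<Longrightarrow> e k \<le> M" unfolding M_def by auto
  have "M \<in> e ` {0..Suc n}" unfolding M_def by (intro Max_in) auto
  then obtain k0 where k0: "k0 \<le> Suc n" "e k0 = M" by auto
  define m where "m = (LEAST k. k \<le> Suc n \<and> e k = M)"
  have m: "m \<le> Suc n" "e m = M" using LeastI[of "\<lambda>k. k \<le> Suc n \<and> e k = M", OF conjI[OF k0]] m_def by auto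
  have mmin: "\<And>k. k < m \<Longrightarrow> \<not> (k \<le> Suc n \<and> e k = M)" using not_less_Least m_def by blast
  have Mpos: "M > 0" using Mge[OF q0(1)] q0(2) by simp
  have "m \<noteq> 0" using m Mpos assms(1) by (metis less_irrefl)
  have "m \<noteq> Suc n" using m Mpos assms(2) by (metis less_irrefl)
  have "1 \<le> m" "m \<le> n" using m \<open>m \<noteq> 0\<close> \<open>m \<noteq> Suc n\<close> by auto
  then have "2 * e m = e (m-1) + e (Suc m)" using assms(3) m Mpos by force
  moreover have "e (Suc m) \<le> M" "e (m-1) \<le> M" using Mge \<open>m \<le> n\<close> by auto
  ultimately have "e (m-1) = M" using m by linarith
  moreover have "m - 1 < m" using \<open>1 \<le> m\<close> by simp
  ultimately have "m - 1 \<le> Suc n \<and> e (m-1) = M" using \<open>m \<le> n\<close> by simp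
  then show False using mmin[OF \<open>m - 1 < m\<close>] by blast
qed



lemma modular_T:
  assumes "1 \<le> q" "X \<inter> {q-1,q,Suc q} \<subseteq> Y \<or> Y \<inter> {q-1,q,Suc q} \<subseteq> X"
  shows "Tl up n q (X \<union> Y) + Tl up n q (X \<inter> Y) - Tl up n q X - Tl up n q Y = 0"
  using assms(2)
proof
  assume h: "X \<inter> {q-1,q,Suc q} \<subseteq> Y"
  have "Tl up n q (X \<union> Y) = Tl up n q Y" by (rule Tl_local[OF assms(1)]) (use h in blast)
  moreover have "Tl up n q (X \<inter> Y) = Tl up n q X" by (rule Tl_local[OF assms(1)]) (use h in blast)
  ultimately show ?thesis by simp
next
  assume h: "Y \<inter> {q-1,q,Suc q} \<subseteq> X"
  have "Tl up n q (X \<union> Y) = Tl up n q X" by (rule Tl_local[OF assms(1)]) (use h in blast)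
  moreover have "Tl up n q (X \<inter> Y) = Tl up n q Y" by (rule Tl_local[OF assms(1)]) (use h in blast)
  ultimately show ?thesis by simp
qed

lemma abstract_main:
  fixes up :: "nat \<Rightarrow> bool" and n :: nat and cq :: "nat \<Rightarrow> real" and c :: real
    and F :: "nat set \<Rightarrow> real"
  assumes n2: "2 \<le> n"
   and eq: "\<And>I. pideal up n I \<Longrightarrow> F I = c + (\<Sum>q\<in>{1..n}. cq q * Tl up n q I)"
   and modF: "\<And>X Y. pideal up n X \<Longrightarrow> pideal up n Y \<Longrightarrow> F (X \<union> Y) + F (X \<inter> Y) = F X + F Y"
   and togF: "\<And>I q. pideal up n I \<Longrightarrow> pideal up n (insert q I) \<Longrightarrow> q \<in> {1..n} \<Longrightarrow>
        \<not> turn up n q \<Longrightarrow> F (insert q I) = F I"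
   and F0: "F {} = 0"
  shows "c = 0 \<and> (\<forall>q\<in>{1..n}. cq q = 0)"
proof -
  define G where "G = (\<lambda>I. (\<Sum>q\<in>{1..n}. cq q * Tl up n q I))"
  have eqG: "\<And>I. pideal up n I \<Longrightarrow> F I = c + G I" using eq G_def by simp
  have mix: "(\<Sum>q\<in>{1..n}. cq q * (Tl up n q (X \<union> Y) + Tl up n q (X \<inter> Y) - Tl up n q X - Tl up n q Y)) = 0"
    if "pideal up n X" "pideal up n Y" for X Y
  proof -
    have "F (X \<union> Y) + F (X \<inter> Y) = F X + F Y" using modF that by blast
    then have "G (X \<union> Y) + G (X \<inter> Y) - G X - G Y = 0"
      using eqG[OF that(1)] eqG[OF that(2)] eqG[OF pideal_Un[OF that]] eqG[OF pideal_Int[OF that]]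
      by linarith
    then show ?thesis unfolding G_def
      by (simp add: distrib_left right_diff_distrib sum.distrib sum_subtractf)
  qed
  have tog: "(\<Sum>p\<in>{1..n}. cq p * (Tl up n p (insert q X) - Tl up n p X)) = 0"
    if "pideal up n X" "pideal up n (insert q X)" "q \<in> {1..n}" "\<not> turn up n q" for X q
  proof -
    have "F (insert q X) = F X" using togF that by blast
    then have "G (insert q X) - G X = 0" using eqG that by simp
    then show ?thesis unfolding G_def by (simp add: right_diff_distrib sum_subtractf)
  qed
  have turn0: "cq s = 0" if ts: "turn up n s" for s
  proof -
    from ts have s: "2 \<le> s" "s < n" "up (s-1) \<noteq> up s" unfolding turn_def by auto
    show ?thesis
    proof (cases "up (s-1)")
      case True
      then have ns: "\<not> up s" using s by simp
      define X where "X = {1..s-1}"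
      define Y where "Y = {Suc s..n}"
      have iX: "pideal up n X" unfolding X_def by (rule pideal_prefix) (use s True in auto)
      have iY: "pideal up n Y" unfolding Y_def by (rule pideal_suffix) (use s ns in auto)
      have pt: "cq q * (Tl up n q (X \<union> Y) + Tl up n q (X \<inter> Y) - Tl up n q X - Tl up n q Y)
          = (if q = s then cq s else 0)" if "q \<in> {1..n}" for q
      proof (cases "q = s")
        case True
        have "Suc 0 \<le> s - Suc 0" "\<not> s \<le> s - Suc 0" using s by simp_all
        then show ?thesis using True s \<open>up (s-1)\<close> ns unfolding X_def Y_def by (simp add: Tl_alt)
      next
        case False
        have "X \<inter> {q-1,q,Suc q} \<subseteq> Y \<or> Y \<inter> {q-1,q,Suc q} \<subseteq> X"
          using False unfolding X_def Y_def by (cases "q < s") auto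
        then show ?thesis using modular_T[of q X Y up n] that False by simp
      qed
      have "0 = (\<Sum>q\<in>{1..n}. cq q * (Tl up n q (X \<union> Y) + Tl up n q (X \<inter> Y) - Tl up n q X - Tl up n q Y))"
        using mix[OF iX iY] by simp
      also have "\<dots> = (\<Sum>q\<in>{1..n}. (if q = s then cq s else 0))"
        by (rule sum.cong) (simp_all add: pt)
      also have "\<dots> = cq s" using s by (simp add: sum.delta)
      finally show ?thesis by simp
    next
      case False
      then have ns: "up s" using s by simp
      define X where "X = {1..s}"
      define Y where "Y = {Suc (s-1)..n}"
      have iX: "pideal up n X" unfolding X_def by (rule pideal_prefix) (use s ns in auto)
      have iY: "pideal up n Y" unfolding Y_def by (rule pideal_suffix) (use s False in auto)
      have pt: "cq q * (Tl up n q (X \<union> Y) + Tl up n q (X \<inter> Y) - Tl up n q X - Tl up n q Y)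
          = (if q = s then - cq s else 0)" if "q \<in> {1..n}" for q
      proof (cases "q = s")
        case True
        have "Suc 0 \<le> s - Suc 0" "s - Suc 0 \<noteq> s" "\<not> s \<le> s - Suc 0" using s by simp_all
        then show ?thesis using True s \<open>\<not> up (s-1)\<close> ns unfolding X_def Y_def by (simp add: Tl_alt)
      next
        case False
        have "X \<inter> {q-1,q,Suc q} \<subseteq> Y \<or> Y \<inter> {q-1,q,Suc q} \<subseteq> X"
          using False s unfolding X_def Y_def by (cases "q < s") auto
        then show ?thesis using modular_T[of q X Y up n] that False by simp
      qed
      have "0 = (\<Sum>q\<in>{1..n}. cq q * (Tl up n q (X \<union> Y) + Tl up n q (X \<inter> Y) - Tl up n q X - Tl up n q Y))"
        using mix[OF iX iY] by simp
      also have "\<dots> = (\<Sum>q\<in>{1..n}. (if q = s then - cq s else 0))"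
        by (rule sum.cong) (simp_all add: pt)
      also have "\<dots> = - cq s" using s by (simp add: sum.delta)
      finally show ?thesis by simp
    qed
  qed
  define e where "e = (\<lambda>p. if 1 \<le> p \<and> p \<le> n then cq p else 0)"
  have harm: "2 * e q = e (q-1) + e (Suc q)" if q: "1 \<le> q" "q \<le> n" "\<not> turn up n q" for q
  proof -
    have nt: "2 \<le> q \<Longrightarrow> q < n \<Longrightarrow> up (q-1) = up q" using q(3) unfolding turn_def by auto
    define R where "R = (\<lambda>p. (if p = q then -2 * e q else 0) + (if p = q - 1 then e (q-1) else 0)
        + (if p = Suc q then e (Suc q) else 0))"
    have sumR: "(\<Sum>p\<in>{1..n}. R p) = -2 * e q + e (q-1) + e (Suc q)"
    proof -
      have "(\<Sum>p\<in>{1..n}. R p) = (if q \<in> {1..n} then -2 * e q else 0) + (if q - 1 \<in> {1..n} then e (q-1) else 0)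
        + (if Suc q \<in> {1..n} then e (Suc q) else 0)"
        unfolding R_def by (simp add: sum.distrib sum.delta)
      also have "\<dots> = -2 * e q + e (q-1) + e (Suc q)" unfolding e_def by auto
      finally show ?thesis .
    qed
    have fin: "2 * e q = e (q-1) + e (Suc q)"
      if "(\<Sum>p\<in>{1..n}. cq p * (Tl up n p X' - Tl up n p X)) = 0"
         "\<And>p. p \<in> {1..n} \<Longrightarrow> cq p * (Tl up n p X' - Tl up n p X) = R p" for X X'
    proof -
      have "(\<Sum>p\<in>{1..n}. R p) = 0" using that by (metis (no_types, lifting) sum.cong)
      then show ?thesis using sumR by linarith
    qed
    have eq_in: "e p = cq p" if "1 \<le> p" "p \<le> n" for p using that e_def by simp
    have qneq: "q \<noteq> q - Suc 0" "q - Suc 0 \<noteq> Suc q" using q(1) by auto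
    have tz: "cq p = 0" if "turn up n p" for p using turn0 that by blast
    show ?thesis
    proof (cases "if q < n then up q else up (q-1)")
      case True
      have upq: "q < n \<Longrightarrow> up q" using True by simp
      have upq1: "2 \<le> q \<Longrightarrow> up (q-1)" using True nt q n2 by (cases "q < n") auto
      have upqI: "q < n \<longrightarrow> up q" "2 \<le> q \<longrightarrow> up (q-1)" using upq upq1 by auto
      define X where "X = {1..q-1}"
      define X' where "X' = {1..q}"
      have iX: "pideal up n X" unfolding X_def by (rule pideal_prefix) (use q upq1 in auto)
      have iX': "pideal up n X'" unfolding X'_def by (rule pideal_prefix) (use q upq in auto)
      have ins: "X' = insert q X" unfolding X_def X'_def using q by auto
      have s0: "(\<Sum>p\<in>{1..n}. cq p * (Tl up n p X' - Tl up n p X)) = 0"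
        using tog[of X q] iX iX' ins q by simp
      show ?thesis
      proof (rule fin[OF s0])
        fix p assume p: "p \<in> {1..n}"
        show "cq p * (Tl up n p X' - Tl up n p X) = R p"
        proof -
          consider "p = q" | "2 \<le> q" "p = q - 1" | "p = Suc q" | "p \<noteq> q" "p \<noteq> q - 1" "p \<noteq> Suc q"
            using p q(1) by (cases "2 \<le> q") auto
          then show ?thesis
          proof cases
            case 1
            have "Tl up n q X' = -1" unfolding X'_def Tl_alt using q upqI by auto
            moreover have "Tl up n q X = 1" unfolding X_def Tl_alt using q upqI by auto
            ultimately show ?thesis using 1 R_def eq_in q qneq by simp
          next
            case 2
            show ?thesis
            proof (cases "turn up n (q-1)")
              case True
              then show ?thesis using 2 tz[OF True] eq_in[of "q-1"] q R_def qneq by simp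
            next
              case False
              have u2: "2 \<le> q - 1 \<Longrightarrow> up (q - 1 - 1) = up (q-1)" using False q unfolding turn_def by auto
              have "Tl up n (q-1) X' = 0" unfolding X'_def Tl_alt using q 2 upqI by auto
              moreover have "Tl up n (q-1) X = -1" unfolding X_def Tl_alt using q 2 upqI u2 by auto
              ultimately show ?thesis using 2 R_def eq_in[of "q-1"] q qneq by simp
            qed
          next
            case 3
            show ?thesis
            proof (cases "turn up n (Suc q)")
              case True
              then show ?thesis using 3 tz[OF True] eq_in[of "Suc q"] p R_def qneq by simp
            next
              case False
              have u2: "Suc q < n \<Longrightarrow> up (Suc q) = up q" using False q unfolding turn_def by auto
              have "q < n" using 3 p by simp
              have "Tl up n (Suc q) X' = 1" unfolding X'_def Tl_alt using q 3 upqI \<open>q < n\<close> u2 by auto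
              moreover have "Tl up n (Suc q) X = 0" unfolding X_def Tl_alt using q 3 upqI \<open>q < n\<close> by auto
              ultimately show ?thesis using 3 R_def eq_in[of "Suc q"] p qneq by simp
            qed
          next
            case 4
            have "Tl up n p X' = Tl up n p X"
              by (rule Tl_local) (use p 4 ins in auto)
            then show ?thesis using 4 R_def by simp
          qed
        qed
      qed
    next
      case False
      have dnI: "q < n \<longrightarrow> \<not> up q" "2 \<le> q \<longrightarrow> \<not> up (q-1)" using False nt q n2 by (cases "q < n"; auto)+
      define X where "X = {Suc q..n}"
      define X' where "X' = {Suc (q-1)..n}"
      have iX: "pideal up n X" unfolding X_def by (rule pideal_suffix) (use q dnI in auto)
      have iX': "pideal up n X'" unfolding X'_def by (rule pideal_suffix) (use q dnI in auto)
      have ins: "X' = insert q X" unfolding X_def X'_def using q by auto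
      have s0: "(\<Sum>p\<in>{1..n}. cq p * (Tl up n p X' - Tl up n p X)) = 0"
        using tog[of X q] iX iX' ins q by simp
      show ?thesis
      proof (rule fin[OF s0])
        fix p assume p: "p \<in> {1..n}"
        show "cq p * (Tl up n p X' - Tl up n p X) = R p"
        proof -
          consider "p = q" | "2 \<le> q" "p = q - 1" | "p = Suc q" | "p \<noteq> q" "p \<noteq> q - 1" "p \<noteq> Suc q"
            using p q(1) by (cases "2 \<le> q") auto
          then show ?thesis
          proof cases
            case 1
            have "Tl up n q X' = -1" unfolding X'_def Tl_alt using q dnI by auto
            moreover have "Tl up n q X = 1" unfolding X_def Tl_alt using q dnI by auto
            ultimately show ?thesis using 1 R_def eq_in q qneq by simp
          next
            case 2
            show ?thesis
            proof (cases "turn up n (q-1)")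
              case True
              then show ?thesis using 2 tz[OF True] eq_in[of "q-1"] q R_def qneq by simp
            next
              case False
              have u2: "2 \<le> q - 1 \<Longrightarrow> up (q - 1 - 1) = up (q-1)" using False q unfolding turn_def by auto
              have "Tl up n (q-1) X' = 1" unfolding X'_def Tl_alt using q 2 dnI u2 by auto
              moreover have "Tl up n (q-1) X = 0" unfolding X_def Tl_alt using q 2 dnI by auto
              ultimately show ?thesis using 2 R_def eq_in[of "q-1"] q qneq by simp
            qed
          next
            case 3
            show ?thesis
            proof (cases "turn up n (Suc q)")
              case True
              then show ?thesis using 3 tz[OF True] eq_in[of "Suc q"] p R_def qneq by simp
            next
              case False
              have u2: "Suc q < n \<Longrightarrow> up (Suc q) = up q" using False q unfolding turn_def by auto
              have "q < n" using 3 p by simp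
              have "Tl up n (Suc q) X' = 0" unfolding X'_def Tl_alt using q 3 dnI \<open>q < n\<close> by auto
              moreover have "Tl up n (Suc q) X = -1" unfolding X_def Tl_alt using q 3 dnI \<open>q < n\<close> u2 by auto
              ultimately show ?thesis using 3 R_def eq_in[of "Suc q"] p qneq by simp
            qed
          next
            case 4
            have "Tl up n p X' = Tl up n p X"
              by (rule Tl_local) (use p 4 ins in auto)
            then show ?thesis using 4 R_def by simp
          qed
        qed
      qed
    qed
  qed
  have hyp: "\<forall>q. 1 \<le> q \<and> q \<le> n \<longrightarrow> e q = 0 \<or> 2 * e q = e (q-1) + e (Suc q)"
  proof (intro allI impI)
    fix q assume q: "1 \<le> q \<and> q \<le> n"
    show "e q = 0 \<or> 2 * e q = e (q-1) + e (Suc q)"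
    proof (cases "turn up n q")
      case True then show ?thesis using turn0 q e_def by simp
    next
      case False then show ?thesis using harm q by blast
    qed
  qed
  have e0: "e 0 = 0" "e (Suc n) = 0" unfolding e_def by auto
  have le1: "\<forall>q \<le> Suc n. e q \<le> 0" by (rule maxprin[OF e0 hyp])
  have hyp2: "\<forall>q. 1 \<le> q \<and> q \<le> n \<longrightarrow> (\<lambda>p. - e p) q = 0 \<or> 2 * (\<lambda>p. - e p) q = (\<lambda>p. - e p) (q-1) + (\<lambda>p. - e p) (Suc q)"
    using hyp by auto
  have le2: "\<forall>q \<le> Suc n. (\<lambda>p. - e p) q \<le> 0" by (rule maxprin[OF _ _ hyp2]) (use e0 in auto)
  have cz: "\<forall>q\<in>{1..n}. cq q = 0"
  proof
    fix q assume q: "q \<in> {1..n}"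
    have "e q = 0" using le1 le2 q by (meson atLeastAtMost_iff le_SucI order_antisym neg_le_0_iff_le)
    then show "cq q = 0" using q e_def by simp
  qed
  have "F {} = c" using eq[OF pideal_empty] cz by simp
  then show ?thesis using F0 cz by simp
qed



lemma turn_toggle:
  assumes "turn up n s"
  shows "\<exists>I. pideal up n I \<and> pideal up n (insert s I) \<and> s \<notin> I"
proof -
  from assms have s: "2 \<le> s" "s < n" "up (s-1) \<noteq> up s" unfolding turn_def by auto
  show ?thesis
  proof (cases "up (s-1)")
    case True
    then have ns: "\<not> up s" using s by simp
    define I where "I = {1..s-1} \<union> {Suc s..n}"
    have "pideal up n I" unfolding I_def
      by (rule pideal_Un; rule pideal_prefix pideal_suffix) (use s True ns in auto)
    moreover have "insert s I = {1..n}" unfolding I_def using s by auto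
    moreover have "pideal up n {1..n}" by (rule pideal_prefix) auto
    moreover have "s \<notin> I" unfolding I_def by auto
    ultimately show ?thesis by metis
  next
    case False
    then have ns: "up s" using s by simp
    have "pideal up n {s}" unfolding pideal_def pcov_iff using s False ns by auto
    then show ?thesis using pideal_empty by blast
  qed
qed

lemma fa_Suc: "i < length \<alpha> \<Longrightarrow> fence_a \<alpha> (Suc i) = fence_a \<alpha> i + \<alpha> ! i"
  unfolding fence_a_def by (simp add: take_Suc_conv_app_nth)

lemma fa_0: "fence_a \<alpha> 0 = 0" unfolding fence_a_def by simp

lemma fa_mono: "i \<le> j \<Longrightarrow> fence_a \<alpha> i \<le> fence_a \<alpha> j"
proof (induction j)
  case 0 then show ?case by simp
next
  case (Suc j)
  show ?case
  proof (cases "i = Suc j")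
    case True then show ?thesis by simp
  next
    case False
    then have "fence_a \<alpha> i \<le> fence_a \<alpha> j" using Suc by simp
    moreover have "fence_a \<alpha> j \<le> fence_a \<alpha> (Suc j)"
    proof (cases "j < length \<alpha>")
      case True then show ?thesis using fa_Suc by simp
    next
      case False then show ?thesis unfolding fence_a_def by simp
    qed
    ultimately show ?thesis by simp
  qed
qed

lemma fa_strict:
  assumes pos: "\<forall>x\<in>set \<alpha>. x > 0" and "i < j" "j \<le> length \<alpha>"
  shows "fence_a \<alpha> i < fence_a \<alpha> j"
proof -
  obtain k where j: "j = Suc k" using assms(2) by (cases j) auto
  have "k < length \<alpha>" using j assms by simp
  then have "fence_a \<alpha> j = fence_a \<alpha> k + \<alpha> ! k" using fa_Suc j by simp
  moreover have "\<alpha> ! k > 0" using pos \<open>k < length \<alpha>\<close> by simp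
  moreover have "fence_a \<alpha> i \<le> fence_a \<alpha> k" using j assms(2) fa_mono by simp
  ultimately show ?thesis by simp
qed

lemma seg_exists:
  assumes "j < fence_a \<alpha> (length \<alpha>)"
  shows "\<exists>i. 1 \<le> i \<and> i \<le> length \<alpha> \<and> fence_a \<alpha> (i-1) \<le> j \<and> j < fence_a \<alpha> i"
proof -
  define i where "i = (LEAST i. j < fence_a \<alpha> i)"
  have ji: "j < fence_a \<alpha> i" using LeastI[of "\<lambda>i. j < fence_a \<alpha> i", OF assms] i_def by simp
  have "i \<le> length \<alpha>" using Least_le[of "\<lambda>i. j < fence_a \<alpha> i", OF assms] i_def by simp
  moreover have "i \<noteq> 0" using ji fa_0[of \<alpha>] by (metis not_less0)
  moreover have "\<not> j < fence_a \<alpha> (i-1)" using not_less_Least[of "i-1" "\<lambda>i. j < fence_a \<alpha> i"] i_def \<open>i \<noteq> 0\<close> by simp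
  ultimately show ?thesis using ji by (intro exI[of _ i]) auto
qed

lemma seg_unique:
  assumes "1 \<le> i" "fence_a \<alpha> (i-1) \<le> j" "j < fence_a \<alpha> i"
    "1 \<le> i'" "fence_a \<alpha> (i'-1) \<le> j" "j < fence_a \<alpha> i'"
  shows "i = i'"
proof (rule ccontr)
  assume "i \<noteq> i'"
  then consider "i < i'" | "i' < i" by linarith
  then show False
  proof cases
    case 1
    then have "fence_a \<alpha> i \<le> fence_a \<alpha> (i'-1)" by (intro fa_mono) simp
    then show False using assms by simp
  next
    case 2
    then have "fence_a \<alpha> i' \<le> fence_a \<alpha> (i-1)" by (intro fa_mono) simp
    then show False using assms by simp
  qed
qed

definition upf :: "nat list \<Rightarrow> nat \<Rightarrow> bool" where
  "upf \<alpha> j \<longleftrightarrow> (j, Suc j) \<in> fence_cover \<alpha>"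

lemma seg_dir:
  assumes "1 \<le> j" "j < fence_n \<alpha>" "1 \<le> i" "i \<le> length \<alpha>" "fence_a \<alpha> (i-1) \<le> j" "j < fence_a \<alpha> i"
  shows "(upf \<alpha> j \<longleftrightarrow> odd i) \<and> ((Suc j, j) \<in> fence_cover \<alpha> \<longleftrightarrow> even i)"
proof -
  have a: "(j, Suc j) \<in> fence_cover \<alpha> \<longleftrightarrow> odd i"
  proof
    assume "(j, Suc j) \<in> fence_cover \<alpha>"
    then obtain j' i' where h: "1 \<le> j'" "j' \<le> fence_n \<alpha> - 1" "1 \<le> i'" "i' \<le> length \<alpha>"
      "fence_a \<alpha> (i' - 1) \<le> j'" "j' < fence_a \<alpha> i'"
      "(odd i' \<and> j = j' \<and> Suc j = j' + 1) \<or> (even i' \<and> j = j' + 1 \<and> Suc j = j')"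
      unfolding fence_cover_def by blast
    then have "odd i'" "j' = j" by auto
    then have "i' = i" using seg_unique[of i' \<alpha> j i] h assms by simp
    then show "odd i" using \<open>odd i'\<close> by simp
  next
    assume "odd i"
    then have "1 \<le> j \<and> j \<le> fence_n \<alpha> - 1 \<and> 1 \<le> i \<and> i \<le> length \<alpha> \<and> fence_a \<alpha> (i-1) \<le> j \<and> j < fence_a \<alpha> i
      \<and> ((odd i \<and> j = j \<and> Suc j = j + 1) \<or> (even i \<and> j = j + 1 \<and> Suc j = j))" using assms by auto
    then show "(j, Suc j) \<in> fence_cover \<alpha>" unfolding fence_cover_def by blast
  qed
  have b: "(Suc j, j) \<in> fence_cover \<alpha> \<longleftrightarrow> even i"
  proof
    assume "(Suc j, j) \<in> fence_cover \<alpha>"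
    then obtain j' i' where h: "1 \<le> j'" "j' \<le> fence_n \<alpha> - 1" "1 \<le> i'" "i' \<le> length \<alpha>"
      "fence_a \<alpha> (i' - 1) \<le> j'" "j' < fence_a \<alpha> i'"
      "(odd i' \<and> Suc j = j' \<and> j = j' + 1) \<or> (even i' \<and> Suc j = j' + 1 \<and> j = j')"
      unfolding fence_cover_def by blast
    then have "even i'" "j' = j" by auto
    then have "i' = i" using seg_unique[of i' \<alpha> j i] h assms by simp
    then show "even i" using \<open>even i'\<close> by simp
  next
    assume "even i"
    then have "1 \<le> j \<and> j \<le> fence_n \<alpha> - 1 \<and> 1 \<le> i \<and> i \<le> length \<alpha> \<and> fence_a \<alpha> (i-1) \<le> j \<and> j < fence_a \<alpha> i
      \<and> ((odd i \<and> Suc j = j \<and> j = j + 1) \<or> (even i \<and> Suc j = j + 1 \<and> j = j))" using assms by auto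
    then show "(Suc j, j) \<in> fence_cover \<alpha>" unfolding fence_cover_def by blast
  qed
  show ?thesis using a b unfolding upf_def by simp
qed



lemma cover_eq: "fence_cover \<alpha> = pcov (upf \<alpha>) (fence_n \<alpha>)"
proof (rule set_eqI, clarify)
  fix p q
  show "(p, q) \<in> fence_cover \<alpha> \<longleftrightarrow> (p, q) \<in> pcov (upf \<alpha>) (fence_n \<alpha>)"
  proof
    assume "(p, q) \<in> fence_cover \<alpha>"
    then obtain j i where h: "1 \<le> j" "j \<le> fence_n \<alpha> - 1" "1 \<le> i" "i \<le> length \<alpha>"
      "fence_a \<alpha> (i - 1) \<le> j" "j < fence_a \<alpha> i"
      "(odd i \<and> p = j \<and> q = j + 1) \<or> (even i \<and> p = j + 1 \<and> q = j)"
      unfolding fence_cover_def by blast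
    have jn: "j < fence_n \<alpha>" using h by linarith
    have d: "upf \<alpha> j \<longleftrightarrow> odd i" using seg_dir[OF h(1) jn h(3-6)] by simp
    show "(p, q) \<in> pcov (upf \<alpha>) (fence_n \<alpha>)" unfolding pcov_iff using h jn d by auto
  next
    assume "(p, q) \<in> pcov (upf \<alpha>) (fence_n \<alpha>)"
    then obtain j where j: "1 \<le> j" "j < fence_n \<alpha>"
      "(upf \<alpha> j \<and> p = j \<and> q = Suc j) \<or> (\<not> upf \<alpha> j \<and> p = Suc j \<and> q = j)"
      unfolding pcov_def by blast
    show "(p, q) \<in> fence_cover \<alpha>"
    proof (cases "upf \<alpha> j")
      case True then show ?thesis using j unfolding upf_def by auto
    next
      case False
      have "j < fence_a \<alpha> (length \<alpha>)" using j(2) unfolding fence_n_def by simp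
      then obtain i where i: "1 \<le> i" "i \<le> length \<alpha>" "fence_a \<alpha> (i-1) \<le> j" "j < fence_a \<alpha> i"
        using seg_exists by blast
      have "(Suc j, j) \<in> fence_cover \<alpha>" using seg_dir[OF j(1) j(2) i] False by simp
      then show ?thesis using j False by auto
    qed
  qed
qed

lemma elems_eq: "fence_elems \<alpha> = {1..fence_n \<alpha>}" unfolding fence_elems_def by simp

lemma ideal_eq: "I \<in> fence_ideals \<alpha> \<longleftrightarrow> pideal (upf \<alpha>) (fence_n \<alpha>) I"
proof
  assume I: "I \<in> fence_ideals \<alpha>"
  show "pideal (upf \<alpha>) (fence_n \<alpha>) I" unfolding pideal_def
  proof (intro conjI allI impI)
    show "I \<subseteq> {1..fence_n \<alpha>}" using I unfolding fence_ideals_def elems_eq by simp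
  next
    fix p q assume pq: "(p, q) \<in> pcov (upf \<alpha>) (fence_n \<alpha>)" and q: "q \<in> I"
    have "fence_le \<alpha> p q" unfolding fence_le_def elems_eq cover_eq using pq pcov_iff[of p q] by auto
    then show "p \<in> I" using I q unfolding fence_ideals_def by blast
  qed
next
  assume I: "pideal (upf \<alpha>) (fence_n \<alpha>) I"
  show "I \<in> fence_ideals \<alpha>" unfolding fence_ideals_def
  proof (intro CollectI conjI ballI allI impI)
    show "I \<subseteq> fence_elems \<alpha>" using I unfolding pideal_def elems_eq by simp
  next
    fix q p assume q: "q \<in> I" and "fence_le \<alpha> p q"
    then have r: "(p, q) \<in> (pcov (upf \<alpha>) (fence_n \<alpha>))\<^sup>*" unfolding fence_le_def cover_eq by simp
    have "y \<in> I \<longrightarrow> p \<in> I" if "(p, y) \<in> (pcov (upf \<alpha>) (fence_n \<alpha>))\<^sup>*" for y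
      using that
    proof (induction rule: rtrancl_induct)
      case base then show ?case by simp
    next
      case (step y z)
      then show ?case using I unfolding pideal_def by blast
    qed
    then show "p \<in> I" using r q by blast
  qed
qed

lemma T_eq:
  assumes I: "pideal (upf \<alpha>) (fence_n \<alpha>) I" and q: "q \<in> {1..fence_n \<alpha>}"
  shows "toggle_T \<alpha> q I = Tl (upf \<alpha>) (fence_n \<alpha>) q I"
proof -
  let ?C = "pcov (upf \<alpha>) (fence_n \<alpha>)"
  let ?E = "{1..fence_n \<alpha>}"
  have Isub: "I \<subseteq> ?E" using I unfolding pideal_def by simp
  have idl: "\<And>x y. (x, y) \<in> ?C\<^sup>* \<Longrightarrow> x \<in> ?E \<Longrightarrow> y \<in> I \<Longrightarrow> x \<in> I"
  proof -
    fix x y assume "(x, y) \<in> ?C\<^sup>*" "x \<in> ?E" "y \<in> I"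
    then have "fence_le \<alpha> x y" unfolding fence_le_def elems_eq cover_eq using Isub by auto
    then show "x \<in> I" using I[folded ideal_eq] \<open>y \<in> I\<close> unfolding fence_ideals_def by blast
  qed
  have memE: "\<And>x y. (x, y) \<in> ?C \<Longrightarrow> x \<in> ?E \<and> y \<in> ?E" unfolding pcov_iff by auto
  have neq: "\<And>x y. (x, y) \<in> ?C \<Longrightarrow> x \<noteq> y" unfolding pcov_iff by auto
  have C1: "(q \<in> fence_elems \<alpha> - I \<and> (\<forall>p\<in>fence_elems \<alpha> - I. \<not> fence_less \<alpha> p q))
      \<longleftrightarrow> (q \<notin> I \<and> (\<forall>p. (p, q) \<in> ?C \<longrightarrow> p \<in> I))"
  proof
    assume h: "q \<in> fence_elems \<alpha> - I \<and> (\<forall>p\<in>fence_elems \<alpha> - I. \<not> fence_less \<alpha> p q)"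
    show "q \<notin> I \<and> (\<forall>p. (p, q) \<in> ?C \<longrightarrow> p \<in> I)"
    proof (intro conjI allI impI)
      show "q \<notin> I" using h by simp
    next
      fix p assume pq: "(p, q) \<in> ?C"
      have "fence_less \<alpha> p q" unfolding fence_less_def fence_le_def elems_eq cover_eq
        using pq memE[OF pq] neq[OF pq] by auto
      then show "p \<in> I" using h memE[OF pq] unfolding elems_eq by blast
    qed
  next
    assume h: "q \<notin> I \<and> (\<forall>p. (p, q) \<in> ?C \<longrightarrow> p \<in> I)"
    show "q \<in> fence_elems \<alpha> - I \<and> (\<forall>p\<in>fence_elems \<alpha> - I. \<not> fence_less \<alpha> p q)"
    proof (intro conjI ballI notI)
      show "q \<in> fence_elems \<alpha> - I" using h q elems_eq by simp
    next
      fix p assume p: "p \<in> fence_elems \<alpha> - I" and "fence_less \<alpha> p q"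
      then have r: "(p, q) \<in> ?C\<^sup>*" "p \<noteq> q" unfolding fence_less_def fence_le_def cover_eq by auto
      from r(1) show False
      proof (cases rule: rtranclE)
        case base then show False using r(2) by simp
      next
        case (step y)
        then have "y \<in> I" using h by blast
        then have "p \<in> I" using idl[OF step(1)] p elems_eq by simp
        then show False using p by simp
      qed
    qed
  qed
  have C2: "(q \<in> I \<and> (\<forall>p\<in>I. \<not> fence_less \<alpha> q p)) \<longleftrightarrow> (q \<in> I \<and> (\<forall>p. (q, p) \<in> ?C \<longrightarrow> p \<notin> I))"
  proof
    assume h: "q \<in> I \<and> (\<forall>p\<in>I. \<not> fence_less \<alpha> q p)"
    show "q \<in> I \<and> (\<forall>p. (q, p) \<in> ?C \<longrightarrow> p \<notin> I)"
    proof (intro conjI allI impI notI)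
      show "q \<in> I" using h by simp
    next
      fix p assume pq: "(q, p) \<in> ?C" and "p \<in> I"
      have "fence_less \<alpha> q p" unfolding fence_less_def fence_le_def elems_eq cover_eq
        using pq memE[OF pq] neq[OF pq] by auto
      then show False using h \<open>p \<in> I\<close> by blast
    qed
  next
    assume h: "q \<in> I \<and> (\<forall>p. (q, p) \<in> ?C \<longrightarrow> p \<notin> I)"
    show "q \<in> I \<and> (\<forall>p\<in>I. \<not> fence_less \<alpha> q p)"
    proof (intro conjI ballI notI)
      show "q \<in> I" using h by simp
    next
      fix p assume p: "p \<in> I" and "fence_less \<alpha> q p"
      then have r: "(q, p) \<in> ?C\<^sup>*" "q \<noteq> p" unfolding fence_less_def fence_le_def cover_eq by auto
      from r(1) show False
      proof (cases rule: converse_rtranclE)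
        case base then show False using r(2) by simp
      next
        case (step y)
        then have "y \<in> I" using idl[OF step(2)] memE[OF step(1)] p by blast
        then show False using h step(1) by blast
      qed
    qed
  qed
  show ?thesis unfolding toggle_T_def Tl_def by (simp only: C1 C2)
qed

lemma shared_turn:
  assumes len: "length \<alpha> \<ge> 2" and pos: "\<forall>x\<in>set \<alpha>. x > 0"
    and hd: "hd \<alpha> \<ge> 2" and last: "last \<alpha> \<ge> 2"
    and i: "i \<in> {1..length \<alpha> - 1}"
  shows "turn (upf \<alpha>) (fence_n \<alpha>) (fence_a \<alpha> i)"
proof -
  let ?t = "length \<alpha>"
  let ?a = "fence_a \<alpha>"
  have ne: "\<alpha> \<noteq> []" using len by auto
  have a1: "?a 1 = hd \<alpha>" using fa_Suc[of 0 \<alpha>] fa_0[of \<alpha>] ne by (simp add: hd_conv_nth)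
  have at: "?a ?t = ?a (?t - 1) + last \<alpha>" using fa_Suc[of "?t - 1" \<alpha>] ne len
    by (simp add: last_conv_nth)
  have s2: "2 \<le> ?a i" using fa_mono[of 1 i \<alpha>] i a1 hd by simp
  have sle: "?a i \<le> ?a (?t - 1)" using fa_mono i by simp
  have sn: "?a i < fence_n \<alpha>" using sle at last unfolding fence_n_def by simp
  have "?a (i-1) < ?a i" using fa_strict[OF pos, of "i-1" i] i by auto
  then have seg1: "?a (i-1) \<le> ?a i - 1" "?a i - 1 < ?a i" using s2 by auto
  have seg2: "?a (Suc i - 1) \<le> ?a i" "?a i < ?a (Suc i)"
    using fa_strict[OF pos, of i "Suc i"] i by auto
  have f1: "1 \<le> ?a i - 1" "?a i - 1 < fence_n \<alpha>" "1 \<le> i" "i \<le> length \<alpha>" "1 \<le> ?a i"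
     "1 \<le> Suc i" "Suc i \<le> length \<alpha>" using s2 sn i by auto
  have d1: "upf \<alpha> (?a i - 1) \<longleftrightarrow> odd i"
    using seg_dir[OF f1(1-4) seg1] by simp
  have d2: "upf \<alpha> (?a i) \<longleftrightarrow> odd (Suc i)"
    using seg_dir[OF f1(5) sn f1(6-7) seg2] by simp
  show ?thesis unfolding turn_def using s2 sn d1 d2 by simp
qed



theorem lemma4p3:
  fixes \<alpha> :: "nat list"
  assumes "length \<alpha> \<ge> 2"
    and "\<forall>x\<in>set \<alpha>. x > 0"
    and "hd \<alpha> \<ge> 2" and "last \<alpha> \<ge> 2"
  shows "inj_on (fence_shared \<alpha>) {1..length \<alpha> - 1}
    \<and> (\<forall>d :: nat \<Rightarrow> real.
         (\<forall>I\<in>fence_ideals \<alpha>. (\<Sum>i\<in>{1..length \<alpha> - 1}. d i * chi_hat (fence_shared \<alpha> i) I) = 0)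
         \<longrightarrow> (\<forall>i\<in>{1..length \<alpha> - 1}. d i = 0))
    \<and> (\<forall>f\<in>toggleability_space \<alpha>.
         (\<exists>d :: nat \<Rightarrow> real. \<forall>I\<in>fence_ideals \<alpha>.
             f I = (\<Sum>i\<in>{1..length \<alpha> - 1}. d i * chi_hat (fence_shared \<alpha> i) I))
         \<longrightarrow> (\<forall>I\<in>fence_ideals \<alpha>. f I = 0))"
proof -
  let ?K = "{1..length \<alpha> - 1}"
  let ?a = "fence_a \<alpha>"
  let ?n = "fence_n \<alpha>"
  let ?up = "upf \<alpha>"
  have sh: "fence_shared \<alpha> = ?a" unfolding fence_shared_def by (rule ext) simp
  have inj: "inj_on ?a ?K"
  proof (rule inj_onI)
    fix i j assume i: "i \<in> ?K" and j: "j \<in> ?K" and e: "?a i = ?a j"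
    show "i = j"
    proof (rule ccontr)
      assume "i \<noteq> j"
      then consider "i < j" | "j < i" by linarith
      then show False
      proof cases
        case 1
        have "j \<le> length \<alpha>" using j by auto
        then show False using fa_strict[OF assms(2) 1] e by simp
      next
        case 2
        have "i \<le> length \<alpha>" using i by auto
        then show False using fa_strict[OF assms(2) 2] e by simp
      qed
    qed
  qed
  have turnK: "\<And>i. i \<in> ?K \<Longrightarrow> turn ?up ?n (?a i)" using shared_turn[OF assms] by blast
  have n2: "2 \<le> ?n"
  proof -
    have "1 \<in> ?K" using assms(1) by simp
    then show ?thesis using turnK[of 1] unfolding turn_def by simp
  qed
  have part2: "\<forall>i\<in>?K. d i = 0"
    if h: "\<forall>I\<in>fence_ideals \<alpha>. (\<Sum>i\<in>?K. d i * chi_hat (?a i) I) = 0" for d :: "nat \<Rightarrow> real"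
  proof
    fix i0 assume i0: "i0 \<in> ?K"
    obtain I where I: "pideal ?up ?n I" "pideal ?up ?n (insert (?a i0) I)" "?a i0 \<notin> I"
      using turn_toggle[OF turnK[OF i0]] by blast
    have "(\<Sum>i\<in>?K. d i * chi_hat (?a i) (insert (?a i0) I)) - (\<Sum>i\<in>?K. d i * chi_hat (?a i) I) = 0"
      using h I(1,2) ideal_eq by simp
    then have "(\<Sum>i\<in>?K. d i * (chi_hat (?a i) (insert (?a i0) I) - chi_hat (?a i) I)) = 0"
      by (simp add: right_diff_distrib sum_subtractf)
    moreover have "(\<Sum>i\<in>?K. d i * (chi_hat (?a i) (insert (?a i0) I) - chi_hat (?a i) I))
        = (\<Sum>i\<in>?K. if i = i0 then d i else 0)"
    proof (rule sum.cong)
      fix i assume i: "i \<in> ?K"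
      have "?a i = ?a i0 \<longleftrightarrow> i = i0" using inj_onD[OF inj _ i i0] by blast
      then show "d i * (chi_hat (?a i) (insert (?a i0) I) - chi_hat (?a i) I) = (if i = i0 then d i else 0)"
        using I(3) unfolding chi_hat_def by auto
    qed simp
    moreover have "(\<Sum>i\<in>?K. if i = i0 then d i else 0) = d i0" using i0 by (simp add: sum.delta)
    ultimately show "d i0 = 0" by simp
  qed
  have part3: "\<forall>I\<in>fence_ideals \<alpha>. f I = 0"
    if f: "f \<in> toggleability_space \<alpha>"
      and hd: "\<forall>I\<in>fence_ideals \<alpha>. f I = (\<Sum>i\<in>?K. d i * chi_hat (?a i) I)" for f d
  proof -
    from f obtain c cq where ccq: "\<forall>I\<in>fence_ideals \<alpha>.
      f I = c + (\<Sum>q\<in>fence_elems \<alpha>. cq q * toggle_T \<alpha> q I)"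
      unfolding toggleability_space_def toggle_const_def by blast
    define F where "F = (\<lambda>I. (\<Sum>i\<in>?K. d i * chi_hat (?a i) I))"
    have eq: "F I = c + (\<Sum>q\<in>{1..?n}. cq q * Tl ?up ?n q I)" if I: "pideal ?up ?n I" for I
    proof -
      have "F I = f I" using hd I ideal_eq F_def by simp
      also have "\<dots> = c + (\<Sum>q\<in>fence_elems \<alpha>. cq q * toggle_T \<alpha> q I)" using ccq I ideal_eq by simp
      also have "(\<Sum>q\<in>fence_elems \<alpha>. cq q * toggle_T \<alpha> q I) = (\<Sum>q\<in>{1..?n}. cq q * Tl ?up ?n q I)"
        unfolding elems_eq by (rule sum.cong) (simp_all add: T_eq[OF I])
      finally show ?thesis .
    qed
    have modF: "F (X \<union> Y) + F (X \<inter> Y) = F X + F Y" for X Y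
    proof -
      have "F (X \<union> Y) + F (X \<inter> Y) = (\<Sum>i\<in>?K. d i * (chi_hat (?a i) (X \<union> Y) + chi_hat (?a i) (X \<inter> Y)))"
        unfolding F_def by (simp add: distrib_left sum.distrib)
      also have "\<dots> = (\<Sum>i\<in>?K. d i * (chi_hat (?a i) X + chi_hat (?a i) Y))"
        by (rule sum.cong) (auto simp: chi_hat_def)
      also have "\<dots> = F X + F Y" unfolding F_def by (simp add: distrib_left sum.distrib)
      finally show ?thesis .
    qed
    have togF: "F (insert q I) = F I" if "\<not> turn ?up ?n q" for I q
    proof -
      have "\<And>i. i \<in> ?K \<Longrightarrow> ?a i \<noteq> q" using turnK that by blast
      then show ?thesis unfolding F_def by (intro sum.cong) (auto simp: chi_hat_def)
    qed
    have F0: "F {} = 0" unfolding F_def chi_hat_def by simp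
    have res: "c = 0 \<and> (\<forall>q\<in>{1..?n}. cq q = 0)"
      apply (rule abstract_main[where up="?up" and n="?n" and F=F and c=c and cq=cq, OF n2])
         apply (erule eq)
        apply (rule modF)
       apply (rule togF, assumption)
      apply (rule F0)
      done
    show ?thesis
    proof
      fix I assume I: "I \<in> fence_ideals \<alpha>"
      have "f I = c + (\<Sum>q\<in>fence_elems \<alpha>. cq q * toggle_T \<alpha> q I)" using ccq I by simp
      then show "f I = 0" using res unfolding elems_eq by simp
    qed
  qed
  show ?thesis unfolding sh using inj part2 part3 by blast
qed

end
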